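(* If there is an $n$-vertex weighted graph $G=(V,w)$ with $\widetilde{\mathrm{cdim}}(G)=k$, then $D_{\mathrm{lin}}(\mathrm{MINCUT}_n)\ge k$.
   Context: An $n$-vertex weighted graph $G=(V,w)$ is given by $w\in\mathbb{R}_{\ge0}^{\binom n2}$ (weights on unordered pairs of distinct vertices). For $\emptyset\neq X\subsetneq V$, let $S_X\in\{0,1\}^{\binom n2}$ be the indicator vector of the pairs with exactly one endpoint in $X$; the cut weight is $\langle S_X,w\rangle$, and $c^*$ denotes the minimum cut weight. For $Y\in\mathbb{R}^{M\times N}$, $w\in\mathbb{R}^N$ and $c\in\mathbb{R}^M$, the $(w,c)$ one-sided row-by-row $\ell_1$-approximate rank of $Y$ is the minimum rank of a matrix $\tilde Y\in\mathbb{R}^{M\times N}$ with $\tilde Y\le Y$ entrywise and $\sum_j |w(j)(Y(i,j)-\tilde Y(i,j))|\le c(i)$ for every row $i$. Let $M_G$ be the $(2^{n-1}-1)\times\binom n2$ matrix whose rows are the vectors $S_X$ over all $2^{n-1}-1$ unordered bipartitions $\{X,V\setminus X\}$ of $V$ into nonempty parts, and let $c=M_G w-c^*\mathbf{1}$. The $\ell_1$-approximate cut dimension $\widetilde{\mathrm{cdim}}(G)$ is the $(w,c)$ one-sided row-by-row $\ell_1$-approximate rank of $M_G$. In $\mathrm{MINCUT}_n$ the input is an $n$-vertex weighted graph and the output is its minimum cut weight; a linear query $x\in\mathbb{R}^{\binom n2}$ is answered by $\langle x,w\rangle$ (adaptively). $D_{\mathrm{lin}}(\mathrm{MINCUT}_n)$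 is the minimum over deterministic linear query algorithms correct on all $n$-vertex weighted graphs of the worst-case number of queries. *)

theory Defs
  imports "HOL-Analysis.Analysis" "HOL-Library.Function_Algebras"
begin

text \<open>Vertices of an n-vertex graph are 0,...,n-1. The coordinates of R^(n choose 2)
  are indexed by the unordered pairs of distinct vertices, represented as (i,j) with i<j<n.
  Vectors in R^(n choose 2) are functions on these index pairs (values outside are ignored).\<close>

definition vpairs :: "nat \<Rightarrow> (nat \<times> nat) set" where
  "vpairs n = {(i, j). i < j \<and> j < n}"

definition ip :: "nat \<Rightarrow> (nat \<times> nat \<Rightarrow> real) \<Rightarrow> (nat \<times> nat \<Rightarrow> real) \<Rightarrow> real" where
  "ip n x w = (\<Sum>p\<in>vpairs n. x p * w p)"

definition weighted_graph :: "nat \<Rightarrow> (nat \<times> nat \<Rightarrow> real) \<Rightarrow> bool" where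
  "weighted_graph n w \<longleftrightarrow> (\<forall>p\<in>vpairs n. 0 \<le> w p)"

definition cutvec :: "nat set \<Rightarrow> nat \<times> nat \<Rightarrow> real" where
  "cutvec X p = (if (fst p \<in> X) \<noteq> (snd p \<in> X) then 1 else 0)"

definition cut_sets :: "nat \<Rightarrow> nat set set" where
  "cut_sets n = {X. X \<noteq> {} \<and> X \<subset> {0..<n}}"

definition mincut :: "nat \<Rightarrow> (nat \<times> nat \<Rightarrow> real) \<Rightarrow> real" where
  "mincut n w = Min ((\<lambda>X. ip n (cutvec X) w) ` cut_sets n)"

text \<open>Unordered bipartitions {X, V-X}, each represented by the side X not containing vertex 0.\<close>
definition bipartitions :: "nat \<Rightarrow> nat set set" where
  "bipartitions n = {X \<in> cut_sets n. 0 \<notin> X}"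

definition fscale :: "real \<Rightarrow> ('c \<Rightarrow> real) \<Rightarrow> ('c \<Rightarrow> real)" where
  "fscale a f = (\<lambda>j. a * f j)"

definition mat_rank :: "'r set \<Rightarrow> 'c set \<Rightarrow> ('r \<Rightarrow> 'c \<Rightarrow> real) \<Rightarrow> nat" where
  "mat_rank R C Y = vector_space.dim fscale ((\<lambda>i. (\<lambda>j. if j \<in> C then Y i j else 0)) ` R)"

definition os_l1_approx_rank ::
  "'r set \<Rightarrow> 'c set \<Rightarrow> ('r \<Rightarrow> 'c \<Rightarrow> real) \<Rightarrow> ('c \<Rightarrow> real) \<Rightarrow> ('r \<Rightarrow> real) \<Rightarrow> nat" where
  "os_l1_approx_rank R C Y w c =
     (LEAST r. \<exists>Y'. mat_rank R C Y' = r
        \<and> (\<forall>i\<in>R. \<forall>j\<in>C. Y' i j \<le> Y i j)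
        \<and> (\<forall>i\<in>R. (\<Sum>j\<in>C. \<bar>w j * (Y i j - Y' i j)\<bar>) \<le> c i))"

definition cut_matrix :: "nat set \<Rightarrow> nat \<times> nat \<Rightarrow> real" where
  "cut_matrix X p = cutvec X p"

definition approx_cdim :: "nat \<Rightarrow> (nat \<times> nat \<Rightarrow> real) \<Rightarrow> nat" where
  "approx_cdim n w = os_l1_approx_rank (bipartitions n) (vpairs n) cut_matrix w
      (\<lambda>X. ip n (cut_matrix X) w - mincut n w)"

text \<open>Deterministic adaptive linear query algorithms as decision trees: a node asks the
  query vector x and continues depending on the real answer; a leaf outputs a value.\<close>
datatype qtree = Leaf real | Query "nat \<times> nat \<Rightarrow> real" "real \<Rightarrow> qtree"

primrec run :: "qtree \<Rightarrow> nat \<Rightarrow> (nat \<times> nat \<Rightarrow> real) \<Rightarrow> real" where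
  "run (Leaf r) n w = r"
| "run (Query x f) n w = run (f (ip n x w)) n w"

primrec queries :: "qtree \<Rightarrow> nat \<Rightarrow> (nat \<times> nat \<Rightarrow> real) \<Rightarrow> nat" where
  "queries (Leaf r) n w = 0"
| "queries (Query x f) n w = Suc (queries (f (ip n x w)) n w)"

definition D_lin_mincut :: "nat \<Rightarrow> nat" where
  "D_lin_mincut n = (LEAST d. \<exists>T. \<forall>w. weighted_graph n w \<longrightarrow>
       run T n w = mincut n w \<and> queries T n w \<le> d)"

end

theory Submission imports Defs begin

inductive_set ncomb :: "('v option \<Rightarrow> real) set \<Rightarrow> ('v option \<Rightarrow> real) set" for K where
  ncomb_zero: "(\<lambda>_. 0) \<in> ncomb K"
| ncomb_step: "k \<in> K \<Longrightarrow> g \<in> ncomb K \<Longrightarrow> (t::real) \<ge> 0 \<Longrightarrow> (\<lambda>x. t * k x + g x) \<in> ncomb K"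

lemma ncomb_base: "k \<in> K \<Longrightarrow> k \<in> ncomb K"
  using ncomb_step[OF _ ncomb_zero, of k K 1] by simp

lemma ncomb_add: "g \<in> ncomb K \<Longrightarrow> h \<in> ncomb K \<Longrightarrow> (\<lambda>x. g x + h x) \<in> ncomb K"
proof (induction g rule: ncomb.induct)
  case ncomb_zero then show ?case by simp
next
  case (ncomb_step k g t)
  have "(\<lambda>x. t * k x + (\<lambda>x. g x + h x) x) \<in> ncomb K"
    using ncomb_step by (intro ncomb.ncomb_step) auto
  then show ?case by (simp add: ac_simps)
qed

lemma ncomb_scale: "g \<in> ncomb K \<Longrightarrow> (s::real) \<ge> 0 \<Longrightarrow> (\<lambda>x. s * g x) \<in> ncomb K"
proof (induction g rule: ncomb.induct)
  case ncomb_zero then show ?case by (simp add: ncomb.ncomb_zero)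
next
  case (ncomb_step k g t)
  have "(\<lambda>x. (s*t) * k x + (\<lambda>x. s * g x) x) \<in> ncomb K"
    using ncomb_step by (intro ncomb.ncomb_step) auto
  then show ?case by (simp add: algebra_simps)
qed

lemma ncomb_trans: "g \<in> ncomb K' \<Longrightarrow> K' \<subseteq> ncomb K \<Longrightarrow> g \<in> ncomb K"
proof (induction g rule: ncomb.induct)
  case ncomb_zero then show ?case by (simp add: ncomb.ncomb_zero)
next
  case (ncomb_step k g t)
  then show ?case using ncomb_add ncomb_scale by blast
qed

lemma ncomb_coord0: "g \<in> ncomb K \<Longrightarrow> (\<forall>k\<in>K. k x = 0) \<Longrightarrow> g x = 0"
  by (induction g rule: ncomb.induct) auto

theorem fourier_motzkin:
  fixes V :: "'v set"
  assumes "finite V"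
  shows "finite K \<Longrightarrow> \<not> (\<exists>z. \<forall>k\<in>K. (\<Sum>u\<in>V. k (Some u) * z u) \<le> k None)
     \<Longrightarrow> \<exists>g\<in>ncomb K. (\<forall>u\<in>V. g (Some u) = 0) \<and> g None < 0"
  using assms
proof (induction V arbitrary: K rule: finite_induct)
  case empty
  then obtain k where "k \<in> K" "k None < 0" by force
  then show ?case using ncomb_base by fastforce
next
  case (insert v V)
  define P where "P = {k\<in>K. k (Some v) > 0}"
  define N where "N = {k\<in>K. k (Some v) < 0}"
  define Z where "Z = {k\<in>K. k (Some v) = 0}"
  define comb where "comb = (\<lambda>(p::'v option \<Rightarrow> real, q::'v option \<Rightarrow> real).
       (\<lambda>x. (- q (Some v)) * p x + (p (Some v) * q x + 0)))"
  define K' where "K' = Z \<union> comb ` (P \<times> N)"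
  have finK': "finite K'" unfolding K'_def P_def N_def Z_def using insert.prems(1) by auto
  have K'sub: "K' \<subseteq> ncomb K"
  proof
    fix k assume "k \<in> K'"
    then consider "k \<in> Z" | p q where "p \<in> P" "q \<in> N" "k = comb (p,q)" unfolding K'_def by auto
    then show "k \<in> ncomb K"
    proof cases
      case 1 then show ?thesis using ncomb_base Z_def by auto
    next
      case 2
      have pq: "p \<in> K" "q \<in> K" "p (Some v) > 0" "q (Some v) < 0" using 2 unfolding P_def N_def by auto
      have "(\<lambda>x. p (Some v) * q x + (\<lambda>_. 0) x) \<in> ncomb K"
        using pq by (intro ncomb_step ncomb_zero) auto
      then have "(\<lambda>x. (- q (Some v)) * p x + (\<lambda>x. p (Some v) * q x + (\<lambda>_. 0) x) x) \<in> ncomb K"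
        using pq by (intro ncomb_step) (auto intro: ncomb_zero)
      then show ?thesis unfolding 2(3) comb_def by simp
    qed
  qed
  show ?case
  proof (cases "\<exists>z. \<forall>k\<in>K'. (\<Sum>u\<in>V. k (Some u) * z u) \<le> k None")
    case False
    from insert.IH[OF finK' False] obtain g where g: "g \<in> ncomb K'" "\<forall>u\<in>V. g (Some u) = 0" "g None < 0"
      by blast
    have "\<forall>k\<in>K'. k (Some v) = 0" unfolding K'_def Z_def comb_def by auto
    then have "g (Some v) = 0" using ncomb_coord0 g(1) by blast
    then show ?thesis using g ncomb_trans[OF g(1) K'sub] by auto
  next
    case True
    then obtain z where z: "\<forall>k\<in>K'. (\<Sum>u\<in>V. k (Some u) * z u) \<le> k None" by blast
    define r where "r = (\<lambda>k. k None - (\<Sum>u\<in>V. k (Some u) * z u))"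
    have rZ: "\<And>k. k \<in> Z \<Longrightarrow> 0 \<le> r k" using z unfolding r_def K'_def by auto
    have rPN: "r q / q (Some v) \<le> r p / p (Some v)" if "p \<in> P" "q \<in> N" for p q
    proof -
      have "comb (p,q) \<in> K'" using that unfolding K'_def by auto
      then have "(\<Sum>u\<in>V. comb (p,q) (Some u) * z u) \<le> comb (p,q) None" using z by blast
      moreover have "(\<Sum>u\<in>V. comb (p,q) (Some u) * z u)
          = (- q (Some v)) * (\<Sum>u\<in>V. p (Some u) * z u) + p (Some v) * (\<Sum>u\<in>V. q (Some u) * z u)"
        unfolding comb_def by (simp add: sum.distrib sum_distrib_left algebra_simps sum_subtractf sum_negf)
      ultimately have "0 \<le> (- q (Some v)) * r p + p (Some v) * r q"
        unfolding r_def comb_def by (simp add: algebra_simps)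
      moreover have "p (Some v) > 0" "q (Some v) < 0" using that P_def N_def by auto
      ultimately show ?thesis by (simp add: divide_simps) (smt (verit) mult.commute)
    qed
    define t where "t = (if P \<noteq> {} then Min ((\<lambda>p. r p / p (Some v)) ` P)
        else if N \<noteq> {} then Max ((\<lambda>q. r q / q (Some v)) ` N) else 0)"
    have finP: "finite P" "finite N" using insert.prems(1) P_def N_def by auto
    have tP: "t \<le> r p / p (Some v)" if "p \<in> P" for p
      using that finP unfolding t_def by auto
    have tN: "r q / q (Some v) \<le> t" if "q \<in> N" for q
    proof (cases "P = {}")
      case True then show ?thesis using that finP unfolding t_def by auto
    next
      case False
      then show ?thesis unfolding t_def using finP rPN that by (auto intro!: Min.boundedI)
    qed
    define z' where "z' = z(v := t)"
    have "\<forall>k\<in>K. (\<Sum>u\<in>insert v V. k (Some u) * z' u) \<le> k None"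
    proof
      fix k assume kK: "k \<in> K"
      have "(\<Sum>u\<in>insert v V. k (Some u) * z' u) = k (Some v) * t + (\<Sum>u\<in>V. k (Some u) * z u)"
        using insert.hyps unfolding z'_def by (simp add: sum.insert) (intro sum.cong; auto)
      moreover have "k (Some v) * t \<le> r k"
      proof -
        consider "k \<in> P" | "k \<in> N" | "k \<in> Z" using kK unfolding P_def N_def Z_def by force
        then show ?thesis
        proof cases
          case 1 then have "k (Some v) > 0" using P_def by auto
          with tP[OF 1] show ?thesis by (simp add: field_simps)
        next
          case 2 then have "k (Some v) < 0" using N_def by auto
          with tN[OF 2] show ?thesis by (simp add: field_simps)
        next
          case 3 then show ?thesis using rZ Z_def by auto
        qed
      qed
      ultimately show "(\<Sum>u\<in>insert v V. k (Some u) * z' u) \<le> k None" unfolding r_def by simp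
    qed
    then show ?thesis using insert.prems(2) by blast
  qed
qed


lemma ncomb_decomp:
  fixes row :: "'c \<Rightarrow> 'v option \<Rightarrow> real" and row0 :: "'v option \<Rightarrow> real"
  assumes "g \<in> ncomb (row ` C \<union> {row0})" "finite C"
  shows "\<exists>\<mu> \<mu>0. (\<forall>j\<in>C. \<mu> j \<ge> 0) \<and> \<mu>0 \<ge> 0 \<and> g = (\<lambda>x. (\<Sum>j\<in>C. \<mu> j * row j x) + \<mu>0 * row0 x)"
  using assms(1)
proof (induction g rule: ncomb.induct)
  case ncomb_zero
  show ?case by (rule exI[of _ "\<lambda>_. 0"], rule exI[of _ 0]) auto
next
  case (ncomb_step k g t)
  from ncomb_step.IH obtain \<mu> \<mu>0 where m: "\<forall>j\<in>C. \<mu> j \<ge> 0" "\<mu>0 \<ge> 0"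
    "g = (\<lambda>x. (\<Sum>j\<in>C. \<mu> j * row j x) + \<mu>0 * row0 x)" by blast
  from ncomb_step.hyps(1) consider j where "j \<in> C" "k = row j" | "k = row0" by blast
  then show ?case
  proof cases
    case 1
    define \<mu>' where "\<mu>' = (\<lambda>j'. \<mu> j' + (if j' = j then t else 0))"
    have "(\<lambda>x. t * k x + g x) = (\<lambda>x. (\<Sum>j\<in>C. \<mu>' j * row j x) + \<mu>0 * row0 x)"
    proof
      fix x
      have "(\<Sum>j'\<in>C. \<mu>' j' * row j' x) = (\<Sum>j'\<in>C. \<mu> j' * row j' x) + (\<Sum>j'\<in>C. (if j' = j then t else 0) * row j' x)"
        unfolding \<mu>'_def by (simp add: sum.distrib algebra_simps)
      also have "(\<Sum>j'\<in>C. (if j' = j then t else 0) * row j' x) = t * row j x"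
      proof -
        have "(\<Sum>j'\<in>C. (if j' = j then t else 0) * row j' x) = (\<Sum>j'\<in>C. if j' = j then t * row j x else 0)"
          by (rule sum.cong) auto
        then show ?thesis using 1 assms(2) by simp
      qed
      finally show "t * k x + g x = (\<Sum>j\<in>C. \<mu>' j * row j x) + \<mu>0 * row0 x"
        using 1 m(3) by simp
    qed
    moreover have "\<forall>j\<in>C. \<mu>' j \<ge> 0" using m(1) ncomb_step.hyps(3) unfolding \<mu>'_def by auto
    ultimately show ?thesis using m(2) by blast
  next
    case 2
    have "(\<lambda>x. t * k x + g x) = (\<lambda>x. (\<Sum>j\<in>C. \<mu> j * row j x) + (\<mu>0 + t) * row0 x)"
      using 2 m(3) by (auto simp: algebra_simps)
    then show ?thesis using m ncomb_step.hyps(3) by (intro exI[of _ \<mu>] exI[of _ "\<mu>0 + t"]) auto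
  qed
qed

lemma lp_dual:
  fixes C :: "'c set" and xs :: "('c \<Rightarrow> real) list" and S w :: "'c \<Rightarrow> real" and c :: real
  assumes finC: "finite C" and wpos: "\<forall>j\<in>C. 0 \<le> w j"
    and H: "\<And>w'. (\<forall>j\<in>C. 0 \<le> w' j) \<Longrightarrow>
        (\<forall>i<length xs. (\<Sum>j\<in>C. (xs!i) j * w' j) = (\<Sum>j\<in>C. (xs!i) j * w j)) \<Longrightarrow>
        c \<le> (\<Sum>j\<in>C. S j * w' j)"
  shows "\<exists>lam. (\<forall>j\<in>C. (\<Sum>i<length xs. lam i * (xs!i) j) \<le> S j)
      \<and> c \<le> (\<Sum>i<length xs. lam i * (\<Sum>j\<in>C. (xs!i) j * w j))"
proof (rule ccontr)
  assume nope: "\<not> ?thesis"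
  define m where "m = length xs"
  define \<beta> where "\<beta> = (\<lambda>i. \<Sum>j\<in>C. (xs!i) j * w j)"
  define row where "row = (\<lambda>j. \<lambda>x. case x of None \<Rightarrow> S j | Some i \<Rightarrow> (xs!i) j)"
  define row0 where "row0 = (\<lambda>x. case x of None \<Rightarrow> -c | Some i \<Rightarrow> - \<beta> i)"
  define K where "K = row ` C \<union> {row0}"
  have "\<not> (\<exists>z. \<forall>k\<in>K. (\<Sum>u\<in>{..<m}. k (Some u) * z u) \<le> k None)"
  proof
    assume "\<exists>z. \<forall>k\<in>K. (\<Sum>u\<in>{..<m}. k (Some u) * z u) \<le> k None"
    then obtain z where z: "\<forall>k\<in>K. (\<Sum>u\<in>{..<m}. k (Some u) * z u) \<le> k None" by blast
    have "\<forall>j\<in>C. (\<Sum>i<length xs. z i * (xs!i) j) \<le> S j"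
    proof
      fix j assume "j \<in> C"
      then have "row j \<in> K" unfolding K_def by auto
      then show "(\<Sum>i<length xs. z i * (xs!i) j) \<le> S j" using z unfolding row_def m_def
        by (force simp: mult.commute)
    qed
    moreover have "c \<le> (\<Sum>i<length xs. z i * (\<Sum>j\<in>C. (xs!i) j * w j))"
    proof -
      have "row0 \<in> K" unfolding K_def by auto
      then have "(\<Sum>u\<in>{..<m}. - \<beta> u * z u) \<le> - c" using z unfolding row0_def by force
      then show ?thesis unfolding \<beta>_def m_def by (simp add: sum_negf mult.commute)
    qed
    ultimately show False using nope by blast
  qed
  from fourier_motzkin[OF _ _ this] finC
  obtain g where g: "g \<in> ncomb K" "\<forall>u\<in>{..<m}. g (Some u) = 0" "g None < 0"
    unfolding K_def by auto
  from ncomb_decomp[OF g(1)[unfolded K_def] finC] obtain \<mu> \<mu>0 where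
    mu: "\<forall>j\<in>C. \<mu> j \<ge> 0" "\<mu>0 \<ge> 0" "g = (\<lambda>x. (\<Sum>j\<in>C. \<mu> j * row j x) + \<mu>0 * row0 x)" by blast
  have eqA: "(\<Sum>j\<in>C. \<mu> j * (xs!i) j) = \<mu>0 * \<beta> i" if "i < m" for i
    using g(2) that unfolding mu(3) row_def row0_def by auto
  have ineqS: "(\<Sum>j\<in>C. \<mu> j * S j) < \<mu>0 * c"
    using g(3) unfolding mu(3) row_def row0_def by auto
  show False
  proof (cases "\<mu>0 > 0")
    case True
    define w' where "w' = (\<lambda>j. \<mu> j / \<mu>0)"
    have "c \<le> (\<Sum>j\<in>C. S j * w' j)"
    proof (rule H)
      show "\<forall>j\<in>C. 0 \<le> w' j" using mu(1) True unfolding w'_def by auto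
      show "\<forall>i<length xs. (\<Sum>j\<in>C. (xs!i) j * w' j) = (\<Sum>j\<in>C. (xs!i) j * w j)"
      proof (intro allI impI)
        fix i assume "i < length xs"
        then have "(\<Sum>j\<in>C. \<mu> j * (xs!i) j) = \<mu>0 * \<beta> i" using eqA m_def by auto
        then have "(\<Sum>j\<in>C. (xs!i) j * w' j) = \<beta> i" unfolding w'_def using True
          by (simp add: sum_divide_distrib[symmetric] mult.commute)
        then show "(\<Sum>j\<in>C. (xs!i) j * w' j) = (\<Sum>j\<in>C. (xs!i) j * w j)" unfolding \<beta>_def .
      qed
    qed
    moreover have "(\<Sum>j\<in>C. S j * w' j) = (\<Sum>j\<in>C. \<mu> j * S j) / \<mu>0"
      unfolding w'_def by (simp add: sum_divide_distrib mult.commute)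
    ultimately show False using ineqS True by (simp add: field_simps)
  next
    case False
    then have m0: "\<mu>0 = 0" using mu(2) by auto
    define s where "s = (\<Sum>j\<in>C. \<mu> j * S j)"
    have sneg: "s < 0" using ineqS m0 s_def by simp
    define t where "t = \<bar>(\<Sum>j\<in>C. S j * w j) - c\<bar> / (- s) + 1"
    have tpos: "t \<ge> 0" unfolding t_def using sneg by auto
    define w' where "w' = (\<lambda>j. w j + t * \<mu> j)"
    have "c \<le> (\<Sum>j\<in>C. S j * w' j)"
    proof (rule H)
      show "\<forall>j\<in>C. 0 \<le> w' j" using mu(1) wpos tpos unfolding w'_def by auto
      show "\<forall>i<length xs. (\<Sum>j\<in>C. (xs!i) j * w' j) = (\<Sum>j\<in>C. (xs!i) j * w j)"
      proof (intro allI impI)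
        fix i assume "i < length xs"
        then have "(\<Sum>j\<in>C. \<mu> j * (xs!i) j) = 0" using eqA m_def m0 by auto
        then have "(\<Sum>j\<in>C. (xs!i) j * (t * \<mu> j)) = 0"
          by (simp add: sum_distrib_left[symmetric] algebra_simps)
        then show "(\<Sum>j\<in>C. (xs!i) j * w' j) = (\<Sum>j\<in>C. (xs!i) j * w j)" unfolding w'_def
          by (simp add: distrib_left sum.distrib)
      qed
    qed
    moreover have "(\<Sum>j\<in>C. S j * w' j) = (\<Sum>j\<in>C. S j * w j) + t * s"
      unfolding w'_def s_def by (simp add: distrib_left sum.distrib sum_distrib_left algebra_simps)
    moreover have "t * s < c - (\<Sum>j\<in>C. S j * w j)"
    proof -
      have "t * (- s) = \<bar>(\<Sum>j\<in>C. S j * w j) - c\<bar> + (- s)" unfolding t_def using sneg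
        by (simp add: field_simps)
      then show ?thesis using sneg by linarith
    qed
    ultimately show False by linarith
  qed
qed


lemma sum_fun_apply: "(sum f A) (x::'a) = (\<Sum>a\<in>A. (f a x :: real))"
  by (induction A rule: infinite_finite_induct) auto

lemma fs_vs: "vector_space (fscale :: real \<Rightarrow> ('c \<Rightarrow> real) \<Rightarrow> ('c \<Rightarrow> real))"
  by unfold_locales (auto simp: fscale_def fun_eq_iff algebra_simps)

lemma finite_vpairs: "finite (vpairs n)"
proof -
  have "vpairs n \<subseteq> {..<n} \<times> {..<n}" unfolding vpairs_def by auto
  then show ?thesis by (rule finite_subset) auto
qed

lemma finite_cut_sets: "finite (cut_sets n)"
proof -
  have "cut_sets n \<subseteq> Pow {0..<n}" unfolding cut_sets_def by auto
  then show ?thesis by (rule finite_subset) auto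
qed

lemma ip_cong: "(\<forall>p\<in>vpairs n. w1 p = w2 p) \<Longrightarrow> ip n x w1 = ip n x w2"
  unfolding ip_def by (rule sum.cong) auto

lemma mincut_cong: "(\<forall>p\<in>vpairs n. w1 p = w2 p) \<Longrightarrow> mincut n w1 = mincut n w2"
  unfolding mincut_def using ip_cong[of n w1 w2] by simp

primrec pq :: "qtree \<Rightarrow> nat \<Rightarrow> (nat \<times> nat \<Rightarrow> real) \<Rightarrow> (nat \<times> nat \<Rightarrow> real) list" where
  "pq (Leaf r) n w = []"
| "pq (Query x f) n w = x # pq (f (ip n x w)) n w"

lemma length_pq: "length (pq T n w) = queries T n w"
  by (induction T) auto

lemma run_same: "(\<forall>x\<in>set (pq T n w). ip n x w' = ip n x w) \<Longrightarrow> run T n w' = run T n w"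
  by (induction T) auto

fun build :: "(nat \<times> nat) list \<Rightarrow> (nat \<times> nat \<Rightarrow> real) \<Rightarrow> nat \<Rightarrow> qtree" where
  "build [] acc n = Leaf (mincut n acc)"
| "build (p # ps) acc n = Query (\<lambda>q. if q = p then 1 else 0) (\<lambda>r. build ps (acc(p := r)) n)"

lemma ip_ind: "p \<in> vpairs n \<Longrightarrow> ip n (\<lambda>q. if q = p then 1 else 0) w = w p"
proof -
  assume p: "p \<in> vpairs n"
  have "ip n (\<lambda>q. if q = p then 1 else 0) w = (\<Sum>q\<in>vpairs n. if q = p then w p else 0)"
    unfolding ip_def by (rule sum.cong) auto
  then show ?thesis using p finite_vpairs[of n] by simp
qed

lemma run_build: "set ps \<subseteq> vpairs n \<Longrightarrow>
   run (build ps acc n) n w = mincut n (\<lambda>q. if q \<in> set ps then w q else acc q)"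
proof (induction ps arbitrary: acc)
  case Nil then show ?case by simp
next
  case (Cons p ps)
  have "run (build (p # ps) acc n) n w = run (build ps (acc(p := w p)) n) n w"
    using Cons.prems ip_ind[of p n w] by simp
  also have "\<dots> = mincut n (\<lambda>q. if q \<in> set ps then w q else (acc(p := w p)) q)"
    using Cons by simp
  also have "(\<lambda>q. if q \<in> set ps then w q else (acc(p := w p)) q) = (\<lambda>q. if q \<in> set (p # ps) then w q else acc q)"
    by auto
  finally show ?case .
qed

lemma queries_build: "queries (build ps acc n) n w = length ps"
  by (induction ps arbitrary: acc) auto

lemma D_exists: "\<exists>d T. \<forall>w. weighted_graph n w \<longrightarrow> run T n w = mincut n w \<and> queries T n w \<le> d"
proof -
  obtain ps where sps: "set ps = vpairs n" using finite_list[OF finite_vpairs[of n]] by blast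
  show ?thesis
  proof (intro exI allI impI conjI)
    fix w
    show "run (build ps (\<lambda>_. 0) n) n w = mincut n w"
      using run_build[of ps n "\<lambda>_. 0" w] sps by (auto intro: mincut_cong)
    show "queries (build ps (\<lambda>_. 0) n) n w \<le> length ps" by (simp add: queries_build)
  qed
qed

lemma rank_bound:
  fixes R :: "'r set" and C :: "'c set" and lam :: "'r \<Rightarrow> nat \<Rightarrow> real"
    and xs :: "('c \<Rightarrow> real) list"
  shows "mat_rank R C (\<lambda>X j. \<Sum>i<length xs. lam X i * (xs!i) j) \<le> length xs"
proof -
  interpret fs: vector_space "fscale :: real \<Rightarrow> ('c \<Rightarrow> real) \<Rightarrow> ('c \<Rightarrow> real)" by (rule fs_vs)
  define r where "r = (\<lambda>i. \<lambda>j. if j \<in> C then (xs!i) j else (0::real))"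
  define W where "W = r ` {..<length xs}"
  have "(\<lambda>X. (\<lambda>j. if j \<in> C then (\<Sum>i<length xs. lam X i * (xs!i) j) else 0)) ` R \<subseteq> fs.span W"
  proof
    fix y assume "y \<in> (\<lambda>X. (\<lambda>j. if j \<in> C then (\<Sum>i<length xs. lam X i * (xs!i) j) else 0)) ` R"
    then obtain X where y: "y = (\<lambda>j. if j \<in> C then (\<Sum>i<length xs. lam X i * (xs!i) j) else 0)" by blast
    have "y = (\<Sum>i<length xs. fscale (lam X i) (r i))"
      unfolding y by (rule ext) (simp add: sum_fun_apply fscale_def r_def)
    also have "\<dots> \<in> fs.span W"
      by (intro fs.span_sum fs.span_scale fs.span_base) (auto simp: W_def)
    finally show "y \<in> fs.span W" .
  qed
  then have "fs.dim ((\<lambda>X. (\<lambda>j. if j \<in> C then (\<Sum>i<length xs. lam X i * (xs!i) j) else 0)) ` R) \<le> card W"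
    by (rule fs.dim_le_card) (simp add: W_def)
  also have "card W \<le> length xs" unfolding W_def using card_image_le[of "{..<length xs}" r] by simp
  finally show ?thesis unfolding mat_rank_def .
qed

theorem theorem4:
  fixes n k :: nat and w :: "nat \<times> nat \<Rightarrow> real"
  assumes "weighted_graph n w"
    and "approx_cdim n w = k"
  shows "k \<le> D_lin_mincut n"
proof -
  define d where "d = D_lin_mincut n"
  obtain T where T: "\<forall>w. weighted_graph n w \<longrightarrow> run T n w = mincut n w \<and> queries T n w \<le> d"
    using LeastI_ex[OF D_exists[of n]] unfolding d_def D_lin_mincut_def by blast
  define xs where "xs = pq T n w"
  define C where "C = vpairs n"
  have md: "length xs \<le> d" unfolding xs_def length_pq using T assms(1) by blast
  have wpos: "\<forall>j\<in>C. 0 \<le> w j" using assms(1) unfolding weighted_graph_def C_def by auto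
  have dual: "\<exists>lam. (\<forall>j\<in>C. (\<Sum>i<length xs. lam i * (xs!i) j) \<le> cut_matrix X j)
      \<and> mincut n w \<le> (\<Sum>i<length xs. lam i * (\<Sum>j\<in>C. (xs!i) j * w j))"
    if X: "X \<in> bipartitions n" for X
  proof (rule lp_dual)
    show "finite C" unfolding C_def by (rule finite_vpairs)
    show "\<forall>j\<in>C. 0 \<le> w j" by (rule wpos)
    fix w' assume w'pos: "\<forall>j\<in>C. 0 \<le> w' j"
      and same: "\<forall>i<length xs. (\<Sum>j\<in>C. (xs!i) j * w' j) = (\<Sum>j\<in>C. (xs!i) j * w j)"
    have wg: "weighted_graph n w'" using w'pos unfolding weighted_graph_def C_def by auto
    have "\<forall>x\<in>set (pq T n w). ip n x w' = ip n x w"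
      using same unfolding xs_def ip_def C_def by (auto simp: in_set_conv_nth)
    then have "run T n w' = run T n w" by (rule run_same)
    then have "mincut n w' = mincut n w" using T wg assms(1) by metis
    moreover have "mincut n w' \<le> ip n (cutvec X) w'"
      unfolding mincut_def using X finite_cut_sets[of n] unfolding bipartitions_def
      by (intro Min_le) auto
    ultimately show "mincut n w \<le> (\<Sum>j\<in>C. cut_matrix X j * w' j)"
      unfolding ip_def cut_matrix_def C_def by simp
  qed
  define lam where "lam = (\<lambda>X. SOME lam. (\<forall>j\<in>C. (\<Sum>i<length xs. lam i * (xs!i) j) \<le> cut_matrix X j)
      \<and> mincut n w \<le> (\<Sum>i<length xs. lam i * (\<Sum>j\<in>C. (xs!i) j * w j)))"
  have lamP: "(\<forall>j\<in>C. (\<Sum>i<length xs. lam X i * (xs!i) j) \<le> cut_matrix X j)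
      \<and> mincut n w \<le> (\<Sum>i<length xs. lam X i * (\<Sum>j\<in>C. (xs!i) j * w j))"
    if "X \<in> bipartitions n" for X
    unfolding lam_def using someI_ex[OF dual[OF that]] .
  define Y' where "Y' = (\<lambda>X j. \<Sum>i<length xs. lam X i * (xs!i) j)"
  have c1: "\<forall>X\<in>bipartitions n. \<forall>j\<in>vpairs n. Y' X j \<le> cut_matrix X j"
    using lamP unfolding Y'_def C_def by blast
  have c2: "\<forall>X\<in>bipartitions n. (\<Sum>j\<in>vpairs n. \<bar>w j * (cut_matrix X j - Y' X j)\<bar>)
      \<le> ip n (cut_matrix X) w - mincut n w"
  proof
    fix X assume X: "X \<in> bipartitions n"
    have "(\<Sum>j\<in>C. \<bar>w j * (cut_matrix X j - Y' X j)\<bar>) = (\<Sum>j\<in>C. w j * (cut_matrix X j - Y' X j))"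
      using c1 X wpos unfolding C_def by (intro sum.cong) auto
    also have "\<dots> = ip n (cut_matrix X) w - (\<Sum>j\<in>C. w j * Y' X j)"
      unfolding ip_def C_def by (simp add: algebra_simps sum_subtractf)
    also have "(\<Sum>j\<in>C. w j * Y' X j) = (\<Sum>i<length xs. lam X i * (\<Sum>j\<in>C. (xs!i) j * w j))"
      unfolding Y'_def by (simp add: sum_distrib_left sum_distrib_right algebra_simps sum.swap[of _ C])
    finally show "(\<Sum>j\<in>vpairs n. \<bar>w j * (cut_matrix X j - Y' X j)\<bar>) \<le> ip n (cut_matrix X) w - mincut n w"
      using lamP[OF X] unfolding C_def by linarith
  qed
  have "approx_cdim n w \<le> mat_rank (bipartitions n) (vpairs n) Y'"
    unfolding approx_cdim_def os_l1_approx_rank_def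
    by (rule Least_le) (use c1 c2 in blast)
  also have "\<dots> \<le> length xs" unfolding Y'_def by (rule rank_bound)
  finally show ?thesis using md assms(2) d_def by simp
qed

end
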